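(* Let $\lambda,\mu,\alpha>0$. For $x\in\mathbb{Z}^+$ let $\xi_x(t)$, $t\ge0$, denote the Poisson process with uniform catastrophes with parameters $\lambda,\mu,\alpha$ started from $\xi_x(0)=x$ (defined in the context). Then for any integers $0\le x<y$, any $z\in\mathbb{R}$ and any $t\ge0$, $$\mathbf{P}(\xi_y(t)>z)\le\mathbf{P}(\xi_x(t)>z-|x-y|).$$
   Context: Let $\eta$ be a Markov chain on $\mathbb{Z}^+=\{0,1,2,\dots\}$ with transition probabilities $\mathbf{P}(\eta(n+1)=j\mid\eta(n)=i)=\frac{\lambda}{\lambda+\mu}$ if $j=i+1$ (and $i\ge1$), $=\frac{\mu}{i(\lambda+\mu)}$ if $0\le j<i$, $i\neq0$, and $=1$ if $i=0$, $j=1$. Let $\nu(t)$ be a Poisson process of rate $\alpha$ independent of $\eta$. The process $\xi_x(t):=\eta(\nu(t))$ where $\eta(0)=x$ is the Poisson process with uniform catastrophes started at $x$. *)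

theory Defs
  imports "HOL-Probability.Probability"
begin

definition eta_step :: "real \<Rightarrow> real \<Rightarrow> nat \<Rightarrow> nat pmf" where
  "eta_step lam mu i =
     (if i = 0 then return_pmf 1
      else bind_pmf (bernoulli_pmf (lam / (lam + mu)))
             (\<lambda>b. if b then return_pmf (i + 1) else pmf_of_set {0..<i}))"

primrec eta_dist :: "real \<Rightarrow> real \<Rightarrow> nat \<Rightarrow> nat \<Rightarrow> nat pmf" where
  "eta_dist lam mu x 0 = return_pmf x"
| "eta_dist lam mu x (Suc n) = bind_pmf (eta_dist lam mu x n) (eta_step lam mu)"

text \<open>P(xi_x(t) \<in> A) where xi_x(t) = eta(nu(t)), nu a rate-alpha Poisson process
  independent of eta with eta(0) = x: condition on nu(t) = n, which has
  probability exp(-alpha t)(alpha t)^n / n!.\<close>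
definition xi_prob :: "real \<Rightarrow> real \<Rightarrow> real \<Rightarrow> nat \<Rightarrow> real \<Rightarrow> nat set \<Rightarrow> real" where
  "xi_prob lam mu alpha x t A =
     (\<Sum>n. exp (- alpha * t) * (alpha * t) ^ n / fact n
            * measure_pmf.prob (eta_dist lam mu x n) A)"

end

theory Submission
  imports Defs
begin

lemma divset:
  assumes "0 < (j::nat)" "a < i"
  shows "{0..<i*j} \<inter> {k. k div j = a} = {a*j..<a*j+j}"
proof (rule set_eqI)
  fix k
  have 1: "a*j \<le> k \<and> k < a*j + j" if "k div j = a"
    using div_times_less_eq_dividend[of k j] dividend_less_div_times[of j k] assms that
    by (simp add: mult.commute)
  have 2: "k div j = a" if "a*j \<le> k" "k < a*j + j"
    using that by (simp add: div_nat_eqI mult.commute)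
  have "a*j + j = (a+1)*j" by simp
  also have "\<dots> \<le> i*j" using assms by (intro mult_right_mono) auto
  finally have 3: "a*j + j \<le> i*j" .
  show "k \<in> {0..<i*j} \<inter> {k. k div j = a} \<longleftrightarrow> k \<in> {a*j..<a*j+j}"
    using 1 2 3 by auto
qed

lemma unif_div:
  assumes "0 < i" "0 < (j::nat)"
  shows "map_pmf (\<lambda>k. k div j) (pmf_of_set {0..<i*j}) = pmf_of_set {0..<i}"
proof (rule pmf_eqI)
  fix a
  show "pmf (map_pmf (\<lambda>k. k div j) (pmf_of_set {0..<i*j})) a = pmf (pmf_of_set {0..<i}) a"
  proof (cases "a < i")
    case True
    have "(\<lambda>k. k div j) -` {a} = {k. k div j = a}" by auto
    then show ?thesis using assms True divset[of j a i]
      by (simp add: pmf_map measure_pmf_of_set)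
  next
    case False
    have "{0..<i*j} \<inter> (\<lambda>k. k div j) -` {a} = {}"
      using False assms by (auto simp: less_mult_imp_div_less)
    then show ?thesis using assms False
      by (simp add: pmf_map measure_pmf_of_set)
  qed
qed

lemma div_coupling:
  fixes i j k d :: nat
  assumes "0 < i" "0 < j" "k < i * j" "j \<le> i + d"
  shows "k div i \<le> k div j + d"
proof (cases "j \<le> i")
  case True
  then show ?thesis using assms by (meson div_le_mono2 le_add1 order_trans)
next
  case False
  define q where "q = k div j"
  have qi: "q + 1 \<le> i" using assms unfolding q_def
    using less_mult_imp_div_less[OF assms(3)] by (simp add: Suc_le_eq)
  have k1: "k < (q+1) * j" unfolding q_def using assms
    using dividend_less_div_times[of j k] by (simp add: algebra_simps)
  have "(q+1) * j \<le> (q+1) * (i + d)" using mult_le_mono2[OF assms(4)] .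
  also have "\<dots> = (q+1)*i + (q+1)*d" by (simp add: algebra_simps)
  also have "\<dots> \<le> (q+1)*i + i*d" using mult_le_mono1[OF qi, of d] by simp
  also have "\<dots> = (q + d + 1) * i" by (simp add: algebra_simps)
  finally have "k < (q + d + 1) * i" using k1 by linarith
  then have "k div i < q + d + 1"
    by (simp add: assms(1) div_less_iff_less_mult)
  then show ?thesis unfolding q_def by simp
qed


definition cstep :: "real \<Rightarrow> real \<Rightarrow> nat \<times> nat \<Rightarrow> (nat \<times> nat) pmf" where
  "cstep lam mu p = (case p of (i, j) \<Rightarrow>
     (if i = 0 then map_pmf (\<lambda>b. (1, b)) (eta_step lam mu j)
      else if j = 0 then map_pmf (\<lambda>a. (a, 1)) (eta_step lam mu i)
      else bind_pmf (bernoulli_pmf (lam / (lam + mu)))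
        (\<lambda>b. if b then return_pmf (i + 1, j + 1)
             else map_pmf (\<lambda>k. (k div j, k div i)) (pmf_of_set {0..<i*j}))))"

lemma fst_cstep: "map_pmf fst (cstep lam mu (i, j)) = eta_step lam mu i"
proof -
  have A: "map_pmf (\<lambda>k. k div j) (pmf_of_set {0..<i*j}) = pmf_of_set {0..<i}" if "i > 0" "j > 0"
    using unif_div that by blast
  show ?thesis
    by (auto simp: cstep_def eta_step_def pmf.map_comp o_def map_bind_pmf A
         intro!: bind_pmf_cong)
qed

lemma snd_cstep: "map_pmf snd (cstep lam mu (i, j)) = eta_step lam mu j"
proof -
  have A: "map_pmf (\<lambda>k. k div i) (pmf_of_set {0..<i*j}) = pmf_of_set {0..<j}" if "i > 0" "j > 0"
    using unif_div[of j i] that by (simp add: mult.commute)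
  show ?thesis
    by (auto simp: cstep_def eta_step_def pmf.map_comp o_def map_bind_pmf A
         intro!: bind_pmf_cong)
qed

lemma set_step: "b \<in> set_pmf (eta_step lam mu j) \<Longrightarrow> b \<le> Suc j"
  by (auto simp: eta_step_def split: if_splits)

lemma inv_cstep:
  assumes "b \<le> a + d" "1 \<le> d" "(a', b') \<in> set_pmf (cstep lam mu (a, b))"
  shows "b' \<le> a' + d"
proof (cases "a = 0")
  case True
  then show ?thesis using assms set_step[of b' lam mu b] by (auto simp: cstep_def)
next
  case F: False
  show ?thesis
  proof (cases "b = 0")
    case True
    then show ?thesis using assms F by (auto simp: cstep_def)
  next
    case False
    have "(a',b') = (a+1,b+1) \<or> (\<exists>k<a*b. (a',b') = (k div b, k div a))"
      using assms(3) F False by (auto simp: cstep_def split: if_splits)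
    then show ?thesis
    proof (elim disjE exE conjE)
      fix k assume "k < a*b" "(a',b') = (k div b, k div a)"
      then show ?thesis using div_coupling[of a b k d] F False assms(1) by simp
    qed (use assms in simp)
  qed
qed

primrec cdist :: "real \<Rightarrow> real \<Rightarrow> nat \<Rightarrow> nat \<Rightarrow> nat \<Rightarrow> (nat \<times> nat) pmf" where
  "cdist lam mu x y 0 = return_pmf (x, y)"
| "cdist lam mu x y (Suc n) = bind_pmf (cdist lam mu x y n) (cstep lam mu)"

lemma fst_cdist: "map_pmf fst (cdist lam mu x y n) = eta_dist lam mu x n"
proof (induction n)
  case (Suc n)
  have "map_pmf fst (cdist lam mu x y (Suc n))
      = bind_pmf (cdist lam mu x y n) (\<lambda>p. eta_step lam mu (fst p))"
  proof -
    have "map_pmf fst (cstep lam mu p) = eta_step lam mu (fst p)" for p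
      by (cases p) (simp add: fst_cstep)
    then show ?thesis by (simp add: map_bind_pmf)
  qed
  also have "\<dots> = bind_pmf (map_pmf fst (cdist lam mu x y n)) (eta_step lam mu)"
    by (simp add: bind_map_pmf)
  finally show ?case using Suc by simp
qed simp

lemma snd_cdist: "map_pmf snd (cdist lam mu x y n) = eta_dist lam mu y n"
proof (induction n)
  case (Suc n)
  have "map_pmf snd (cdist lam mu x y (Suc n))
      = bind_pmf (cdist lam mu x y n) (\<lambda>p. eta_step lam mu (snd p))"
  proof -
    have "map_pmf snd (cstep lam mu p) = eta_step lam mu (snd p)" for p
      by (cases p) (simp add: snd_cstep)
    then show ?thesis by (simp add: map_bind_pmf)
  qed
  also have "\<dots> = bind_pmf (map_pmf snd (cdist lam mu x y n)) (eta_step lam mu)"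
    by (simp add: bind_map_pmf)
  finally show ?case using Suc by simp
qed simp

lemma inv_cdist:
  assumes "x < y"
  shows "p \<in> set_pmf (cdist lam mu x y n) \<Longrightarrow> snd p \<le> fst p + (y - x)"
proof (induction n arbitrary: p)
  case 0
  then show ?case using assms by simp
next
  case (Suc n)
  then obtain q where q: "q \<in> set_pmf (cdist lam mu x y n)" "p \<in> set_pmf (cstep lam mu q)"
    by auto
  have "snd q \<le> fst q + (y - x)" using Suc.IH q(1) .
  then show ?case using inv_cstep[of "snd q" "fst q" "y - x" "fst p" "snd p" lam mu] q(2) assms
    by simp
qed

lemma step_compare:
  assumes "x < y"
  shows "measure_pmf.prob (eta_dist lam mu y n) {k. real k > z}
       \<le> measure_pmf.prob (eta_dist lam mu x n) {k. real k > z - real (y - x)}"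
proof -
  let ?C = "cdist lam mu x y n"
  have "measure_pmf.prob (eta_dist lam mu y n) {k. real k > z}
      = measure_pmf.prob ?C (snd -` {k. real k > z} \<inter> set_pmf ?C)"
  proof -
    have "eta_dist lam mu y n = map_pmf snd ?C" by (simp add: snd_cdist)
    then show ?thesis by (simp add: measure_Int_set_pmf)
  qed
  also have "\<dots> \<le> measure_pmf.prob ?C (fst -` {k. real k > z - real (y - x)} \<inter> set_pmf ?C)"
  proof (rule measure_pmf.finite_measure_mono)
    show "snd -` {k. real k > z} \<inter> set_pmf ?C \<subseteq> fst -` {k. real k > z - real (y - x)} \<inter> set_pmf ?C"
    proof
      fix p assume p: "p \<in> snd -` {k. real k > z} \<inter> set_pmf ?C"
      then have "snd p \<le> fst p + (y - x)" using inv_cdist[OF assms] by blast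
      then have "real (snd p) \<le> real (fst p) + real (y - x)" by simp
      with p show "p \<in> fst -` {k. real k > z - real (y - x)} \<inter> set_pmf ?C" by auto
    qed
  qed simp
  also have "\<dots> = measure_pmf.prob (eta_dist lam mu x n) {k. real k > z - real (y - x)}"
  proof -
    have "eta_dist lam mu x n = map_pmf fst ?C" by (simp add: fst_cdist)
    then show ?thesis by (simp add: measure_Int_set_pmf)
  qed
  finally show ?thesis .
qed

theorem corollary4p1:
  fixes lam mu alpha z t :: real and x y :: nat
  assumes "lam > 0" and "mu > 0" and "alpha > 0"
    and "x < y" and "t \<ge> 0"
  shows "xi_prob lam mu alpha y t {k. real k > z}
         \<le> xi_prob lam mu alpha x t {k. real k > z - \<bar>real x - real y\<bar>}"
proof -
  have ab: "\<bar>real x - real y\<bar> = real (y - x)" using assms(4) by simp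
  define w where "w n = exp (- alpha * t) * (alpha * t) ^ n / fact n" for n
  have w0: "w n \<ge> 0" for n unfolding w_def using assms by simp
  have sw: "summable w"
  proof -
    have "summable (\<lambda>n. exp (- alpha * t) * (inverse (fact n) * (alpha * t) ^ n))"
      by (intro summable_mult summable_exp)
    then show ?thesis unfolding w_def by (simp add: field_simps)
  qed
  have sm: "summable (\<lambda>n. w n * measure_pmf.prob (eta_dist lam mu a n) A)" for a A
  proof (rule summable_comparison_test'[OF sw])
    fix n
    show "norm (w n * measure_pmf.prob (eta_dist lam mu a n) A) \<le> w n"
      using w0[of n] by (simp add: abs_mult mult_left_le)
  qed
  have "(\<Sum>n. w n * measure_pmf.prob (eta_dist lam mu y n) {k. real k > z})
      \<le> (\<Sum>n. w n * measure_pmf.prob (eta_dist lam mu x n) {k. real k > z - real (y - x)})"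
    by (intro suminf_le sm mult_left_mono step_compare assms(4) w0)
  then show ?thesis unfolding xi_prob_def ab w_def .
qed

end
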